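(* Let $\mathcal{R}=(\mathcal{F},R)$ be a 3-DCTRS. If $\mathcal{R}$ is terminating, the transformation $\mathcal{U}$ preserves $\to_{\mathcal{R}}$-irreducibility of $\mathcal{R}$, and the TRS $\mathcal{U}(\mathcal{R})$ is confluent, then $\mathcal{R}$ is confluent.
   Context: An oriented CTRS $\mathcal{R}=(\mathcal{F},R)$ has rules $\ell\to r\Leftarrow s_1\approx t_1,\dots,s_n\approx t_n$ ($\ell$ not a variable, $n\ge 0$) where conditions are reachability tests: $s\to_{\mathcal{R}}t$ iff there are a rule, a position $p$ of $s$ and a substitution $\sigma$ with $s|_p=\sigma(\ell)$, $\sigma(s_j)\to^*_{\mathcal{R}}\sigma(t_j)$ for all $j$, and $t=s[\sigma(r)]_p$ (least such relation). It is deterministic (a DCTRS) if for each rule and each $1\le i\le n$, $\mathrm{Var}(s_i)\subseteq\mathrm{Var}(\ell)\cup\bigcup_{j=1}^{i-1}\mathrm{Var}(t_j)$; it is a 3-CTRS if for each rule $\mathrm{Var}(r)\subseteq\mathrm{Var}(\ell)\cup\bigcup_j(\mathrm{Var}(s_j)\cup\mathrm{Var}(t_j))$. $\mathcal{R}$ is terminating if there is no infinite $\to_{\mathcal{R}}$-sequence, and confluent if any two $\to^*_{\mathcal{R}}$-reducts of a common term have a common $\to^*_{\mathcal{R}}$-reduct. Transformation $\mathcal{U}$: each conditional rule $\alpha:\ell\to r\Leftarrow s_1\approx t_1,\dots,s_n\approx t_n$ ($n\ge1$) is replaced by the unconditional rules $\ell\to U^\alpha_1(s_1,\vec x_1)$,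 $U^\alpha_{i-1}(t_{i-1},\vec x_{i-1})\to U^\alpha_i(s_i,\vec x_i)$ for $2\le i\le n$, and $U^\alpha_n(t_n,\vec x_n)\to r$, where the $U^\alpha_i$ are fresh function symbols and $\vec x_i$ is a sequence of the variables in $\mathrm{Var}(\ell)\cup\mathrm{Var}(t_1)\cup\dots\cup\mathrm{Var}(t_{i-1})$; unconditional rules are kept. $\mathcal{U}(\mathcal{R})=(\mathcal{U}(\mathcal{F}),\mathcal{U}(R))$ is the resulting TRS over $\mathcal{F}$ extended with the new symbols. $\mathcal{U}$ preserves $\to_{\mathcal{R}}$-irreducibility if every term $t$ over $\mathcal{F}$ and variables that is $\to_{\mathcal{R}}$-irreducible is also $\to_{\mathcal{U}(\mathcal{R})}$-irreducible. *)

theory Defs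
  imports Main
begin

datatype ('f, 'v) "term" = Var 'v | Fun 'f "('f, 'v) term list"

fun vars_term :: "('f, 'v) term \<Rightarrow> 'v set" where
  "vars_term (Var x) = {x}"
| "vars_term (Fun f ts) = (\<Union>t\<in>set ts. vars_term t)"

fun vars_list_aux :: "('f, 'v) term \<Rightarrow> 'v list" where
  "vars_list_aux (Var x) = [x]"
| "vars_list_aux (Fun f ts) = concat (map vars_list_aux ts)"

definition vars_list :: "('f, 'v) term \<Rightarrow> 'v list" where
  "vars_list t = remdups (vars_list_aux t)"

fun subst :: "('v \<Rightarrow> ('f, 'w) term) \<Rightarrow> ('f, 'v) term \<Rightarrow> ('f, 'w) term" where
  "subst \<sigma> (Var x) = \<sigma> x"
| "subst \<sigma> (Fun f ts) = Fun f (map (subst \<sigma>) ts)"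

datatype ('f, 'v) ctxt = Hole | More 'f "('f, 'v) term list" "('f, 'v) ctxt" "('f, 'v) term list"

fun ctxt_apply :: "('f, 'v) ctxt \<Rightarrow> ('f, 'v) term \<Rightarrow> ('f, 'v) term" where
  "ctxt_apply Hole t = t"
| "ctxt_apply (More f ss1 C ss2) t = Fun f (ss1 @ ctxt_apply C t # ss2)"

fun map_funs :: "('f \<Rightarrow> 'g) \<Rightarrow> ('f, 'v) term \<Rightarrow> ('g, 'v) term" where
  "map_funs h (Var x) = Var x"
| "map_funs h (Fun f ts) = Fun (h f) (map (map_funs h) ts)"

inductive trs_step :: "(('f, 'v) term \<times> ('f, 'v) term) set \<Rightarrow> ('f, 'v) term \<Rightarrow> ('f, 'v) term \<Rightarrow> bool"
  for S where
  "(l, r) \<in> S \<Longrightarrow> trs_step S (ctxt_apply C (subst \<sigma> l)) (ctxt_apply C (subst \<sigma> r))"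

text \<open>A conditional rule \<open>l \<rightarrow> r \<Leftarrow> s1 \<approx> t1, ..., sn \<approx> tn\<close> is the triple
  \<open>(l, r, [(s1,t1), ..., (sn,tn)])\<close>.\<close>
type_synonym ('f, 'v) crule = "('f, 'v) term \<times> ('f, 'v) term \<times> (('f, 'v) term \<times> ('f, 'v) term) list"

inductive cstep :: "('f, 'v) crule set \<Rightarrow> ('f, 'v) term \<Rightarrow> ('f, 'v) term \<Rightarrow> bool"
  for R where
  "(l, r, cs) \<in> R \<Longrightarrow> (\<forall>st\<in>set cs. (cstep R)\<^sup>*\<^sup>* (subst \<sigma> (fst st)) (subst \<sigma> (snd st)))
   \<Longrightarrow> cstep R (ctxt_apply C (subst \<sigma> l)) (ctxt_apply C (subst \<sigma> r))"
  monos rtranclp_mono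

definition ctrs :: "('f, 'v) crule set \<Rightarrow> bool" where
  "ctrs R \<longleftrightarrow> (\<forall>(l, r, cs)\<in>R. \<exists>f ts. l = Fun f ts)"

definition deterministic :: "('f, 'v) crule set \<Rightarrow> bool" where
  "deterministic R \<longleftrightarrow> (\<forall>(l, r, cs)\<in>R. \<forall>i < length cs.
      vars_term (fst (cs ! i)) \<subseteq> vars_term l \<union> (\<Union>j<i. vars_term (snd (cs ! j))))"

definition type3 :: "('f, 'v) crule set \<Rightarrow> bool" where
  "type3 R \<longleftrightarrow> (\<forall>(l, r, cs)\<in>R.
      vars_term r \<subseteq> vars_term l \<union> (\<Union>(s, t)\<in>set cs. vars_term s \<union> vars_term t))"

definition dctrs3 :: "('f, 'v) crule set \<Rightarrow> bool" where
  "dctrs3 R \<longleftrightarrow> ctrs R \<and> deterministic R \<and> type3 R"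

definition terminating :: "('a \<Rightarrow> 'a \<Rightarrow> bool) \<Rightarrow> bool" where
  "terminating r \<longleftrightarrow> \<not> (\<exists>f. \<forall>i. r (f i) (f (Suc i)))"

definition confluent :: "('a \<Rightarrow> 'a \<Rightarrow> bool) \<Rightarrow> bool" where
  "confluent r \<longleftrightarrow> (\<forall>s t u. r\<^sup>*\<^sup>* s t \<and> r\<^sup>*\<^sup>* s u \<longrightarrow> (\<exists>v. r\<^sup>*\<^sup>* t v \<and> r\<^sup>*\<^sup>* u v))"

text \<open>Extended signature: original symbols plus fresh symbols \<open>U^\<alpha>_i\<close>.\<close>
datatype ('f, 'v) usym = Orig 'f | Usym "('f, 'v) crule" nat

abbreviation emb :: "('f, 'v) term \<Rightarrow> (('f, 'v) usym, 'v) term" where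
  "emb \<equiv> map_funs Orig"

text \<open>The variable sequence \<open>x_i\<close> of \<open>U^\<alpha>_i\<close> (1-based \<open>i\<close>): the variables of
  \<open>l, t_1, ..., t_{i-1}\<close> in order of first occurrence.\<close>
definition uvars :: "('f, 'v) crule \<Rightarrow> nat \<Rightarrow> 'v list" where
  "uvars \<alpha> i = (case \<alpha> of (l, r, cs) \<Rightarrow>
     remdups (vars_list l @ concat (map (\<lambda>st. vars_list (snd st)) (take (i - 1) cs))))"

definition Uterm :: "('f, 'v) crule \<Rightarrow> nat \<Rightarrow> ('f, 'v) term \<Rightarrow> (('f, 'v) usym, 'v) term" where
  "Uterm \<alpha> i u = Fun (Usym \<alpha> i) (emb u # map Var (uvars \<alpha> i))"

definition U_rules :: "('f, 'v) crule \<Rightarrow> ((('f, 'v) usym, 'v) term \<times> (('f, 'v) usym, 'v) term) set" where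
  "U_rules \<alpha> = (case \<alpha> of (l, r, cs) \<Rightarrow>
     if cs = [] then {(emb l, emb r)}
     else {(emb l, Uterm \<alpha> 1 (fst (cs ! 0)))}
        \<union> {(Uterm \<alpha> (i - 1) (snd (cs ! (i - 2))), Uterm \<alpha> i (fst (cs ! (i - 1)))) | i. 2 \<le> i \<and> i \<le> length cs}
        \<union> {(Uterm \<alpha> (length cs) (snd (cs ! (length cs - 1))), emb r)})"

definition U_trs :: "('f, 'v) crule set \<Rightarrow> ((('f, 'v) usym, 'v) term \<times> (('f, 'v) usym, 'v) term) set" where
  "U_trs R = (\<Union>\<alpha>\<in>R. U_rules \<alpha>)"

definition preserves_irreducibility :: "('f, 'v) crule set \<Rightarrow> bool" where
  "preserves_irreducibility R \<longleftrightarrow>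
     (\<forall>t :: ('f, 'v) term. (\<nexists>u. cstep R t u) \<longrightarrow> (\<nexists>u. trs_step (U_trs R) (emb t) u))"

end

theory Submission
  imports Defs
begin

lemma emb_subst: "emb (subst \<sigma> t) = subst (emb \<circ> \<sigma>) (emb t)"
  by (induction t) auto

lemma emb_inj: "emb s = emb t \<Longrightarrow> s = t"
proof (induction s arbitrary: t)
  case (Var x)
  then show ?case by (cases t) auto
next
  case (Fun f ss)
  then show ?case
  proof (cases t)
    case (Fun g ts)
    with Fun.prems have "f = g" "map emb ss = map emb ts" by auto
    have "ss = ts"
    proof (rule list.inj_map_strong[where f=emb and fa=emb])
      fix z za assume "z \<in> set ss" "za \<in> set ts" "emb z = emb za"
      then show "z = za" using Fun.IH by blast
    next
      show "map emb ss = map emb ts" by fact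
    qed
    then show ?thesis using Fun \<open>f = g\<close> by simp
  qed auto
qed

lemma step_Fun: "trs_step S a b \<Longrightarrow> trs_step S (Fun f (ss1 @ a # ss2)) (Fun f (ss1 @ b # ss2))"
proof (induction rule: trs_step.induct)
  case (1 l r C \<sigma>)
  then show ?case using trs_step.intros[OF 1, of "More f ss1 C ss2" \<sigma>] by simp
qed

lemma steps_Fun: "(trs_step S)\<^sup>*\<^sup>* a b \<Longrightarrow> (trs_step S)\<^sup>*\<^sup>* (Fun f (ss1 @ a # ss2)) (Fun f (ss1 @ b # ss2))"
proof (induction rule: rtranclp.induct)
  case (rtrancl_into_rtrancl a b c)
  then show ?case using step_Fun by (metis rtranclp.rtrancl_into_rtrancl)
qed auto

lemma steps_ctxt: "(trs_step S)\<^sup>*\<^sup>* (emb a) (emb b) \<Longrightarrow> (trs_step S)\<^sup>*\<^sup>* (emb (ctxt_apply C a)) (emb (ctxt_apply C b))"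
proof (induction C)
  case (More f ss1 C ss2)
  then show ?case using steps_Fun[of S "emb (ctxt_apply C a)" "emb (ctxt_apply C b)" "Orig f" "map emb ss1" "map emb ss2"] by simp
qed simp

lemma rule_step: "(a, b) \<in> S \<Longrightarrow> trs_step S (subst \<tau> a) (subst \<tau> b)"
  using trs_step.intros[of a b S Hole \<tau>] by simp

lemma lift_conds: "(\<lambda>x y. cstep R x y \<and> (trs_step S)\<^sup>*\<^sup>* (emb x) (emb y))\<^sup>*\<^sup>* a b \<Longrightarrow> (trs_step S)\<^sup>*\<^sup>* (emb a) (emb b)"
proof (induction rule: rtranclp.induct)
  case (rtrancl_into_rtrancl a b c)
  then show ?case by (meson rtranclp_trans)
qed simp

lemma Uterm_subst: "subst \<tau> (Uterm \<alpha> i u) = Fun (Usym \<alpha> i) ([] @ subst \<tau> (emb u) # map \<tau> (uvars \<alpha> i))"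
  by (simp add: Uterm_def)

lemma U_mem1: "cs = [] \<Longrightarrow> (emb l, emb r) \<in> U_rules (l, r, cs)"
  unfolding U_rules_def by simp
lemma U_mem2: "cs \<noteq> [] \<Longrightarrow> (emb l, Uterm (l, r, cs) 1 (fst (cs ! 0))) \<in> U_rules (l, r, cs)"
  unfolding U_rules_def by simp
lemma U_mem3: "cs \<noteq> [] \<Longrightarrow> (Uterm (l, r, cs) (length cs) (snd (cs ! (length cs - 1))), emb r) \<in> U_rules (l, r, cs)"
  unfolding U_rules_def by simp
lemma U_mem4: assumes "1 \<le> k" "Suc k \<le> length cs"
  shows "(Uterm (l, r, cs) k (snd (cs ! (k - 1))), Uterm (l, r, cs) (Suc k) (fst (cs ! k))) \<in> U_rules (l, r, cs)"
proof -
  have "cs \<noteq> []" using assms by auto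
  have "(Uterm (l, r, cs) k (snd (cs ! (k - 1))), Uterm (l, r, cs) (Suc k) (fst (cs ! k)))
     \<in> {(Uterm (l, r, cs) (i - 1) (snd (cs ! (i - 2))), Uterm (l, r, cs) i (fst (cs ! (i - 1)))) | i. 2 \<le> i \<and> i \<le> length cs}"
    apply (rule CollectI)
    apply (rule exI[of _ "Suc k"])
    using assms by (simp add: numeral_2_eq_2)
  then show ?thesis using \<open>cs \<noteq> []\<close> unfolding U_rules_def case_prod_conv if_not_P[OF \<open>cs \<noteq> []\<close>] by blast
qed

lemma root_sim:
  assumes R: "(l, r, cs) \<in> R"
    and conds: "\<forall>st\<in>set cs. (trs_step (U_trs R))\<^sup>*\<^sup>* (emb (subst \<sigma> (fst st))) (emb (subst \<sigma> (snd st)))"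
  shows "(trs_step (U_trs R))\<^sup>*\<^sup>* (emb (subst \<sigma> l)) (emb (subst \<sigma> r))"
proof -
  let ?S = "trs_step (U_trs R)"
  let ?\<tau> = "emb \<circ> \<sigma>"
  let ?\<alpha> = "(l, r, cs)"
  have sub: "U_rules ?\<alpha> \<subseteq> U_trs R" using R unfolding U_trs_def by auto
  show ?thesis
  proof (cases "cs = []")
    case True
    then have "(emb l, emb r) \<in> U_trs R" using sub U_mem1 by blast
    then have "?S (subst ?\<tau> (emb l)) (subst ?\<tau> (emb r))" by (rule rule_step)
    then have "?S\<^sup>*\<^sup>* (subst ?\<tau> (emb l)) (subst ?\<tau> (emb r))" by (rule r_into_rtranclp)
    then show ?thesis by (simp only: emb_subst)
  next
    case False
    define n where "n = length cs"
    have n1: "n \<ge> 1" using False n_def by (cases cs) auto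
    have inner: "?S\<^sup>*\<^sup>* (subst ?\<tau> (Uterm ?\<alpha> i (fst (cs ! j)))) (subst ?\<tau> (Uterm ?\<alpha> i (snd (cs ! j))))"
      if "j < n" for i j
    proof -
      have "cs ! j \<in> set cs" using that n_def by auto
      then have "?S\<^sup>*\<^sup>* (emb (subst \<sigma> (fst (cs ! j)))) (emb (subst \<sigma> (snd (cs ! j))))" using conds by blast
      then have "?S\<^sup>*\<^sup>* (subst ?\<tau> (emb (fst (cs ! j)))) (subst ?\<tau> (emb (snd (cs ! j))))" by (simp only: emb_subst)
      from steps_Fun[OF this, of "Usym ?\<alpha> i" "[]" "map ?\<tau> (uvars ?\<alpha> i)"]
      show ?thesis by (simp only: Uterm_subst)
    qed
    define P where "P k = ?S\<^sup>*\<^sup>* (subst ?\<tau> (emb l)) (subst ?\<tau> (Uterm ?\<alpha> k (snd (cs ! (k - 1)))))" for k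
    have P1: "P 1"
    proof -
      have "(emb l, Uterm ?\<alpha> 1 (fst (cs ! 0))) \<in> U_trs R" using sub U_mem2[OF False] by blast
      then have "?S (subst ?\<tau> (emb l)) (subst ?\<tau> (Uterm ?\<alpha> 1 (fst (cs ! 0))))" by (rule rule_step)
      moreover have "?S\<^sup>*\<^sup>* (subst ?\<tau> (Uterm ?\<alpha> 1 (fst (cs ! 0)))) (subst ?\<tau> (Uterm ?\<alpha> 1 (snd (cs ! 0))))"
        by (rule inner) (use n1 in simp)
      ultimately have "?S\<^sup>*\<^sup>* (subst ?\<tau> (emb l)) (subst ?\<tau> (Uterm ?\<alpha> 1 (snd (cs ! 0))))"
        by (rule converse_rtranclp_into_rtranclp)
      then show ?thesis unfolding P_def diff_self_eq_0 .
    qed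
    have PS: "P (Suc k)" if k1: "1 \<le> k" and kn: "k < n" and Pk: "P k" for k
    proof -
      have IH: "?S\<^sup>*\<^sup>* (subst ?\<tau> (emb l)) (subst ?\<tau> (Uterm ?\<alpha> k (snd (cs ! (k - 1)))))"
        using Pk unfolding P_def .
      have "(Uterm ?\<alpha> k (snd (cs ! (k - 1))), Uterm ?\<alpha> (Suc k) (fst (cs ! k))) \<in> U_rules ?\<alpha>"
        by (rule U_mem4) (use k1 kn n_def in auto)
      then have "(Uterm ?\<alpha> k (snd (cs ! (k - 1))), Uterm ?\<alpha> (Suc k) (fst (cs ! k))) \<in> U_trs R"
        using sub by blast
      then have "?S (subst ?\<tau> (Uterm ?\<alpha> k (snd (cs ! (k - 1))))) (subst ?\<tau> (Uterm ?\<alpha> (Suc k) (fst (cs ! k))))"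
        by (rule rule_step)
      moreover have "?S\<^sup>*\<^sup>* (subst ?\<tau> (Uterm ?\<alpha> (Suc k) (fst (cs ! k)))) (subst ?\<tau> (Uterm ?\<alpha> (Suc k) (snd (cs ! k))))"
        by (rule inner) (use kn in simp)
      ultimately have "?S\<^sup>*\<^sup>* (subst ?\<tau> (Uterm ?\<alpha> k (snd (cs ! (k - 1))))) (subst ?\<tau> (Uterm ?\<alpha> (Suc k) (snd (cs ! k))))"
        by (rule converse_rtranclp_into_rtranclp)
      with IH have "?S\<^sup>*\<^sup>* (subst ?\<tau> (emb l)) (subst ?\<tau> (Uterm ?\<alpha> (Suc k) (snd (cs ! k))))"
        by (rule rtranclp_trans)
      then show ?thesis unfolding P_def diff_Suc_1 .
    qed
    have "P n" using n1 P1 PS by (rule dec_induct)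
    then have chainn: "?S\<^sup>*\<^sup>* (subst ?\<tau> (emb l)) (subst ?\<tau> (Uterm ?\<alpha> n (snd (cs ! (n - 1)))))"
      unfolding P_def .
    have "(Uterm ?\<alpha> n (snd (cs ! (n - 1))), emb r) \<in> U_rules ?\<alpha>"
      using U_mem3[OF False] unfolding n_def .
    then have "(Uterm ?\<alpha> n (snd (cs ! (n - 1))), emb r) \<in> U_trs R"
      using sub by blast
    then have "?S (subst ?\<tau> (Uterm ?\<alpha> n (snd (cs ! (n - 1))))) (subst ?\<tau> (emb r))" by (rule rule_step)
    with chainn have "?S\<^sup>*\<^sup>* (subst ?\<tau> (emb l)) (subst ?\<tau> (emb r))"
      by (rule rtranclp.rtrancl_into_rtrancl)
    then show ?thesis by (simp only: emb_subst)
  qed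
qed

lemma sim: "cstep R s t \<Longrightarrow> (trs_step (U_trs R))\<^sup>*\<^sup>* (emb s) (emb t)"
proof (induction rule: cstep.induct)
  case (1 l r cs \<sigma> C)
  have "\<forall>st\<in>set cs. (trs_step (U_trs R))\<^sup>*\<^sup>* (emb (subst \<sigma> (fst st))) (emb (subst \<sigma> (snd st)))"
  proof
    fix st assume st: "st \<in> set cs"
    show "(trs_step (U_trs R))\<^sup>*\<^sup>* (emb (subst \<sigma> (fst st))) (emb (subst \<sigma> (snd st)))"
      using bspec[OF 1(2) st] by (rule lift_conds)
  qed
  from root_sim[OF 1(1) this] show ?case by (rule steps_ctxt)
qed

lemma sims: "(cstep R)\<^sup>*\<^sup>* s t \<Longrightarrow> (trs_step (U_trs R))\<^sup>*\<^sup>* (emb s) (emb t)"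
proof (induction rule: rtranclp.induct)
  case (rtrancl_into_rtrancl a b c)
  then show ?case using sim[of R b c] by (meson rtranclp_trans)
qed simp

lemma nf_exists:
  assumes "terminating r"
  shows "\<exists>n. r\<^sup>*\<^sup>* x n \<and> \<not> (\<exists>u. r n u)"
proof -
  have wf: "wf {(y, x). r x y}"
    using assms unfolding terminating_def wf_iff_no_infinite_down_chain by auto
  show ?thesis
  proof (induction x rule: wf_induct[OF wf])
    case (1 x)
    show ?case
    proof (cases "\<exists>u. r x u")
      case True
      then obtain u where "r x u" by blast
      with 1 obtain n where "r\<^sup>*\<^sup>* u n" "\<not> (\<exists>v. r n v)" by blast
      then show ?thesis using \<open>r x u\<close> by (meson converse_rtranclp_into_rtranclp)
    qed auto
  qed
qed

lemma nf_steps: assumes "\<nexists>u. r a u" "r\<^sup>*\<^sup>* a b" shows "b = a"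
  using assms(2,1) by (cases rule: converse_rtranclpE) auto

theorem theorem29:
  fixes R :: "('f, 'v) crule set"
  assumes "infinite (UNIV :: 'v set)"
    and "dctrs3 R"
    and "terminating (cstep R)"
    and "preserves_irreducibility R"
    and "confluent (trs_step (U_trs R))"
  shows "confluent (cstep R)"
  unfolding confluent_def
proof (intro allI impI)
  fix s t u
  assume a: "(cstep R)\<^sup>*\<^sup>* s t \<and> (cstep R)\<^sup>*\<^sup>* s u"
  obtain t' where t': "(cstep R)\<^sup>*\<^sup>* t t'" "\<nexists>v. cstep R t' v" using nf_exists[OF assms(3)] by blast
  obtain u' where u': "(cstep R)\<^sup>*\<^sup>* u u'" "\<nexists>v. cstep R u' v" using nf_exists[OF assms(3)] by blast
  have "(cstep R)\<^sup>*\<^sup>* s t'" using a t'(1) by (meson rtranclp_trans)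
  moreover have "(cstep R)\<^sup>*\<^sup>* s u'" using a u'(1) by (meson rtranclp_trans)
  ultimately have st: "(trs_step (U_trs R))\<^sup>*\<^sup>* (emb s) (emb t')" "(trs_step (U_trs R))\<^sup>*\<^sup>* (emb s) (emb u')"
    by (blast intro: sims)+
  then obtain v where v: "(trs_step (U_trs R))\<^sup>*\<^sup>* (emb t') v" "(trs_step (U_trs R))\<^sup>*\<^sup>* (emb u') v"
    using assms(5) unfolding confluent_def by blast
  from assms(4) have pi: "\<forall>t :: ('f, 'v) term. (\<nexists>u. cstep R t u) \<longrightarrow> (\<nexists>u. trs_step (U_trs R) (emb t) u)"
    unfolding preserves_irreducibility_def .
  have nt: "\<nexists>w. trs_step (U_trs R) (emb t') w" using spec[OF pi, of t'] t'(2) by (rule mp)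
  have nu: "\<nexists>w. trs_step (U_trs R) (emb u') w" using spec[OF pi, of u'] u'(2) by (rule mp)
  have "emb t' = emb u'" using nf_steps[OF nt v(1)] nf_steps[OF nu v(2)] by simp
  then have "t' = u'" by (rule emb_inj)
  then show "\<exists>v. (cstep R)\<^sup>*\<^sup>* t v \<and> (cstep R)\<^sup>*\<^sup>* u v" using t'(1) u'(1) by (intro exI[of _ u']) simp
qed

end
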